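(* Let $n\ge2$, $x\in\{0,\dots,n-1\}$ and $k:=n+1+x$. Then \[g_n(x):=\mathbb P(I_n=1\mid X=x)=\min\Bigl\{1,\max\Bigl\{0,\frac{V_n(k)}{N(k,n)}\Bigr\}\Bigr\},\] and consequently $\mathbb P(I_n=1)=\sum_{x=0}^{n-1}\binom{n-1}{x}2^{-(n-1)}g_n(x)$.
   Context: Let $\mathcal X=\{A,B,C,D\}$ and let $(X_i)_{i\ge1}$ be the first-order Markov chain on $\mathcal X$ with $\mathbb P(X_1=x)=1/4$ for all $x$ and transitions: from $A$ to $A$ or $C$ w.p. $1/2$ each; from $B$ to $B$ or $D$ w.p. $1/2$ each; from $C$ and from $D$ to each of $A,B,C,D$ w.p. $1/4$. A nonempty string is admissible if all consecutive transitions have positive probability; $\mathcal A$ is the set of admissible nonempty strings; $K(u):=-\log_2\mathbb P(X_1^m=u)$ for $u=x_1^m\in\mathcal A$. $S_k:=\#\{u\in\mathcal A:K(u)=k\}$, $N(k,\ell):=\#\{u\in\mathcal A$ of length $\ell$ with $K(u)=k\}$, $W_{<n}(k):=\sum_{\ell=1}^{n-1}N(k,\ell)$, $V_n(k):=S_k/2-W_{<n}(k)$. Shortlex source code $C$: order nonempty binary strings by length then lexicographically as $b_1,b_2,\dots$; order $\mathcal A$ as $u_1,u_2,\dots$ by increasing $K$, then increasing length, then lexicographically with $A<B<C<D$; set $C(u_j):=b_j$. Let $K_n:=K(X_1^n)$, $L_n:=|C(X_1^n)|$, $I_n:=\mathbf 1\{L_n=K_n-1\}$, and $X:=\#\{i\in\{1,\dots,n-1\}:X_i\in\{C,D\}\}$.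 *)

theory Defs
  imports Complex_Main
begin

datatype sym = A | B | C | D

fun sym_idx :: "sym \<Rightarrow> nat" where
  "sym_idx A = 0" | "sym_idx B = 1" | "sym_idx C = 2" | "sym_idx D = 3"

fun trans_p :: "sym \<Rightarrow> sym \<Rightarrow> real" where
  "trans_p A y = (if y = A \<or> y = C then 1/2 else 0)"
| "trans_p B y = (if y = B \<or> y = D then 1/2 else 0)"
| "trans_p C y = 1/4"
| "trans_p D y = 1/4"

text \<open>P(X_1^m = u), with uniform initial distribution.\<close>
fun prob :: "sym list \<Rightarrow> real" where
  "prob [] = 0"
| "prob [a] = 1/4"
| "prob (a # b # w) = trans_p a b * prob (b # w)"

definition admissible :: "sym list \<Rightarrow> bool" where
  "admissible u \<longleftrightarrow> u \<noteq> [] \<and>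
     (\<forall>i. Suc i < length u \<longrightarrow> trans_p (u ! i) (u ! Suc i) > 0)"

definition K :: "sym list \<Rightarrow> real" where
  "K u = - log 2 (prob u)"

definition S :: "nat \<Rightarrow> nat" where
  "S k = card {u. admissible u \<and> K u = real k}"

definition N :: "nat \<Rightarrow> nat \<Rightarrow> nat" where
  "N k l = card {u. admissible u \<and> length u = l \<and> K u = real k}"

definition W :: "nat \<Rightarrow> nat \<Rightarrow> nat" where
  "W n k = (\<Sum>l = 1..n-1. N k l)"

definition V :: "nat \<Rightarrow> nat \<Rightarrow> real" where
  "V n k = real (S k) / 2 - real (W n k)"

definition sym_lex_less :: "sym list \<Rightarrow> sym list \<Rightarrow> bool" where
  "sym_lex_less u v \<longleftrightarrow> (map sym_idx u, map sym_idx v) \<in> lexord {(a, b). a < b}"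

definition src_less :: "sym list \<Rightarrow> sym list \<Rightarrow> bool" where
  "src_less v u \<longleftrightarrow> K v < K u \<or> (K v = K u \<and> length v < length u)
     \<or> (K v = K u \<and> length v = length u \<and> sym_lex_less v u)"

text \<open>Index j of u in the enumeration u_1, u_2, ... of the admissible strings.\<close>
definition src_rank :: "sym list \<Rightarrow> nat" where
  "src_rank u = card {v. admissible v \<and> src_less v u} + 1"

text \<open>Shortlex order on binary strings (False = 0 < True = 1).\<close>
definition bin_less :: "bool list \<Rightarrow> bool list \<Rightarrow> bool" where
  "bin_less w v \<longleftrightarrow> length w < length v \<or>
     (length w = length v \<and> (w, v) \<in> lexord {(a, b). a < b})"

definition bin_rank :: "bool list \<Rightarrow> nat" where
  "bin_rank w = card {v. v \<noteq> [] \<and> bin_less v w} + 1"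

definition bstr :: "nat \<Rightarrow> bool list" where
  "bstr j = (THE w. w \<noteq> [] \<and> bin_rank w = j)"

definition code :: "sym list \<Rightarrow> bool list" where
  "code u = bstr (src_rank u)"

text \<open>Law of X_1^n: P(X_1^n satisfies E).\<close>
definition Pr :: "nat \<Rightarrow> (sym list \<Rightarrow> bool) \<Rightarrow> real" where
  "Pr n E = (\<Sum>u \<in> {u. length u = n \<and> E u}. prob u)"

definition cond_Pr :: "nat \<Rightarrow> (sym list \<Rightarrow> bool) \<Rightarrow> (sym list \<Rightarrow> bool) \<Rightarrow> real" where
  "cond_Pr n E F = Pr n (\<lambda>u. E u \<and> F u) / Pr n F"

text \<open>I_n = 1 iff L_n = K_n - 1.\<close>
definition Ind :: "sym list \<Rightarrow> bool" where
  "Ind u \<longleftrightarrow> real (length (code u)) = K u - 1"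

text \<open>X = number of i in {1..n-1} with X_i in {C,D}.\<close>
definition Xcnt :: "sym list \<Rightarrow> nat" where
  "Xcnt u = length (filter (\<lambda>s. s = C \<or> s = D) (butlast u))"

definition g :: "nat \<Rightarrow> nat \<Rightarrow> real" where
  "g n x = cond_Pr n Ind (\<lambda>u. Xcnt u = x)"

end

theory Submission
  imports Defs
begin


lemma UNIV_sym: "(UNIV :: sym set) = {A,B,C,D}"
  by (auto intro: sym.exhaust)

lemma finite_UNIV_sym: "finite (UNIV :: sym set)"
  by (simp add: UNIV_sym)

lemma finite_len_le_sym: "finite {u::sym list. length u \<le> m}"
  using finite_lists_length_le[OF finite_UNIV_sym, of m] by simp

lemma finite_len_eq_sym: "finite {u::sym list. length u = m}"
  using finite_lists_length_eq[OF finite_UNIV_sym, of m] by simp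

definition kk :: "sym list \<Rightarrow> nat" where "kk u = length u + 1 + Xcnt u"

lemma Xcnt_Cons2: "Xcnt (a#b#w) = (if a = C \<or> a = D then 1 else 0) + Xcnt (b#w)"
  by (simp add: Xcnt_def)

lemma kk_single[simp]: "kk [a] = 2" by (simp add: kk_def Xcnt_def)

lemma kk_Cons2: "kk (a#b#w) = kk (b#w) + (if a = C \<or> a = D then 2 else 1)"
  by (simp add: kk_def Xcnt_Cons2)

lemma adm_single[simp]: "admissible [a]" by (simp add: admissible_def)
lemma adm_nil[simp]: "\<not> admissible []" by (simp add: admissible_def)

lemma adm_Cons2: "admissible (a#b#w) \<longleftrightarrow> trans_p a b > 0 \<and> admissible (b#w)"
proof
  assume h: "admissible (a#b#w)"
  have "Suc 0 < length (a#b#w)" by simp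
  then have "trans_p ((a#b#w) ! 0) ((a#b#w) ! Suc 0) > 0" using h unfolding admissible_def by blast
  then have 1: "trans_p a b > 0" by simp
  have "\<forall>i. Suc i < length (b#w) \<longrightarrow> trans_p ((b#w) ! i) ((b#w) ! Suc i) > 0"
  proof (intro allI impI)
    fix i assume "Suc i < length (b#w)"
    then have "Suc (Suc i) < length (a#b#w)" by simp
    then have "trans_p ((a#b#w) ! Suc i) ((a#b#w) ! Suc (Suc i)) > 0" using h unfolding admissible_def by blast
    then show "trans_p ((b#w) ! i) ((b#w) ! Suc i) > 0" by simp
  qed
  then show "trans_p a b > 0 \<and> admissible (b#w)" using 1 by (simp add: admissible_def)
next
  assume h: "trans_p a b > 0 \<and> admissible (b#w)"
  show "admissible (a#b#w)" unfolding admissible_def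
  proof (intro conjI allI impI)
    fix i assume i: "Suc i < length (a#b#w)"
    show "trans_p ((a#b#w) ! i) ((a#b#w) ! Suc i) > 0"
    proof (cases i)
      case 0 then show ?thesis using h by simp
    next
      case (Suc j)
      then have "Suc j < length (b#w)" using i by simp
      then show ?thesis using h Suc unfolding admissible_def by simp
    qed
  qed simp
qed

lemma trans_p_nonneg: "trans_p a b \<ge> 0" by (cases a) auto

lemma prob_adm: "admissible u \<Longrightarrow> prob u = (1/2)^(kk u)"
proof (induction u rule: prob.induct)
  case 1 then show ?case by simp
next
  case (2 a) then show ?case by (simp add: power2_eq_square)
next
  case (3 a b w)
  then have p: "trans_p a b > 0" and ih: "prob (b#w) = (1/2)^(kk (b#w))" by (auto simp: adm_Cons2)
  show ?case using p ih by (cases a; cases b) (auto simp: kk_Cons2)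
qed

lemma prob_nadm: "\<not> admissible u \<Longrightarrow> prob u = 0"
proof (induction u rule: prob.induct)
  case (3 a b w)
  show ?case
  proof (cases "admissible (b#w)")
    case True
    then have "\<not> trans_p a b > 0" using 3 by (simp add: adm_Cons2)
    then have "trans_p a b = 0" using trans_p_nonneg[of a b] by linarith
    then show ?thesis by simp
  next
    case False then show ?thesis using 3 by simp
  qed
qed auto

lemma K_adm: "admissible u \<Longrightarrow> K u = real (kk u)"
  by (simp add: K_def prob_adm log_nat_power log_divide)

lemma kk_ge: "u \<noteq> [] \<Longrightarrow> kk u \<ge> 2"
  by (cases u) (auto simp: kk_def)

lemma kk_ge_len: "kk u \<ge> length u" by (simp add: kk_def)



definition E :: "nat \<Rightarrow> sym list set" where "E k = {u. admissible u \<and> kk u = k}"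
definition G :: "nat \<Rightarrow> sym list set" where "G k = {u \<in> E k. hd u = A \<or> hd u = C}"
definition H :: "nat \<Rightarrow> sym list set" where "H k = {u \<in> E k. hd u = B \<or> hd u = D}"

fun t :: "nat \<Rightarrow> nat" where
  "t 0 = 0" | "t (Suc 0) = 0"
| "t (Suc (Suc m)) = (if m = 0 then 2 else 0) + t (Suc m) + 2 * t m"

lemma finite_E: "finite (E k)"
  by (rule finite_subset[OF _ finite_len_le_sym[of k]]) (auto simp: E_def kk_def)

lemma finite_G: "finite (G k)" using finite_E by (simp add: G_def)
lemma finite_H: "finite (H k)" using finite_E by (simp add: H_def)

lemma sym_cases: "x = A \<or> x = B \<or> x = C \<or> x = D" by (cases x) auto

lemma E_GH: "E k = G k \<union> H k" "G k \<inter> H k = {}"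
  using sym_cases by (auto simp: G_def H_def)

lemma card_E: "card (E k) = card (G k) + card (H k)"
  using E_GH card_Un_disjoint[OF finite_G finite_H] by simp

lemma E_small: assumes "k < 2" shows "E k = {}"
proof -
  { fix u assume "u \<in> E k"
    then have "u \<noteq> []" "kk u = k" by (auto simp: E_def)
    then have False using kk_ge[of u] assms by simp }
  then show ?thesis by blast
qed

lemma G_SS: "G (Suc (Suc m)) = (if m = 0 then {[A],[C]} else {}) \<union> ((Cons A) ` G (Suc m) \<union> (Cons C) ` E m)"
proof (rule set_eqI)
  fix u show "u \<in> G (Suc (Suc m)) \<longleftrightarrow> u \<in> (if m = 0 then {[A],[C]} else {}) \<union> ((Cons A) ` G (Suc m) \<union> (Cons C) ` E m)"
  proof (cases u)
    case Nil then show ?thesis by (auto simp: G_def E_def)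
  next
    case (Cons a w)
    show ?thesis
    proof (cases w)
      case Nil then show ?thesis using Cons by (auto simp: G_def E_def)
    next
      case (Cons b w')
      have "\<not> admissible []" by simp
      then show ?thesis using Cons \<open>u = a # w\<close>
        by (cases a; cases b) (auto simp: G_def E_def adm_Cons2 kk_Cons2)
    qed
  qed
qed

lemma H_SS: "H (Suc (Suc m)) = (if m = 0 then {[B],[D]} else {}) \<union> ((Cons B) ` H (Suc m) \<union> (Cons D) ` E m)"
proof (rule set_eqI)
  fix u show "u \<in> H (Suc (Suc m)) \<longleftrightarrow> u \<in> (if m = 0 then {[B],[D]} else {}) \<union> ((Cons B) ` H (Suc m) \<union> (Cons D) ` E m)"
  proof (cases u)
    case Nil then show ?thesis by (auto simp: H_def E_def)
  next
    case (Cons a w)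
    show ?thesis
    proof (cases w)
      case Nil then show ?thesis using Cons by (auto simp: H_def E_def)
    next
      case (Cons b w')
      then show ?thesis using Cons \<open>u = a # w\<close>
        by (cases a; cases b) (auto simp: H_def E_def adm_Cons2 kk_Cons2)
    qed
  qed
qed

lemma card_cons_img: "finite X \<Longrightarrow> card ((Cons a) ` X) = card X"
  by (simp add: card_image)

lemma E_nonempty: "u \<in> E k \<Longrightarrow> u \<noteq> []" by (auto simp: E_def)

lemma card_G_SS: "card (G (Suc (Suc m))) = (if m = 0 then 2 else 0) + card (G (Suc m)) + card (E m)"
proof -
  have d1: "(Cons A) ` G (Suc m) \<inter> (Cons C) ` E m = {}" by auto
  have c1: "card ((Cons A) ` G (Suc m) \<union> (Cons C) ` E m) = card (G (Suc m)) + card (E m)"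
    using card_Un_disjoint[OF finite_imageI[OF finite_G] finite_imageI[OF finite_E] d1]
    by (simp add: card_cons_img finite_G finite_E)
  have d2: "(if m = 0 then {[A],[C]} else {}) \<inter> ((Cons A) ` G (Suc m) \<union> (Cons C) ` E m) = {}"
    by (auto simp: G_def E_def)
  show ?thesis unfolding G_SS
    by (subst card_Un_disjoint[OF _ _ d2]) (auto simp: c1 finite_G finite_E)
qed

lemma card_H_SS: "card (H (Suc (Suc m))) = (if m = 0 then 2 else 0) + card (H (Suc m)) + card (E m)"
proof -
  have d1: "(Cons B) ` H (Suc m) \<inter> (Cons D) ` E m = {}" by auto
  have c1: "card ((Cons B) ` H (Suc m) \<union> (Cons D) ` E m) = card (H (Suc m)) + card (E m)"
    using card_Un_disjoint[OF finite_imageI[OF finite_H] finite_imageI[OF finite_E] d1]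
    by (simp add: card_cons_img finite_H finite_E)
  have d2: "(if m = 0 then {[B],[D]} else {}) \<inter> ((Cons B) ` H (Suc m) \<union> (Cons D) ` E m) = {}"
    by (auto simp: H_def E_def)
  show ?thesis unfolding H_SS
    by (subst card_Un_disjoint[OF _ _ d2]) (auto simp: c1 finite_H finite_E)
qed

lemma card_GH: "card (G k) = t k \<and> card (H k) = t k"
proof (induction k rule: t.induct)
  case 1 then show ?case using E_small[of 0] by (simp add: G_def H_def)
next
  case 2 then show ?case using E_small[of 1] by (simp add: G_def H_def)
next
  case (3 m) then show ?case by (simp add: card_G_SS card_H_SS card_E)
qed

lemma card_E_t: "card (E k) = 2 * t k"
  using card_GH[of k] card_E[of k] by simp

lemma t_pair: "k \<ge> 1 \<Longrightarrow> t k + t (Suc k) = 2^k"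
proof (induction k rule: nat_induct_at_least)
  case base then show ?case by (simp add: numeral_2_eq_2)
next
  case (Suc k)
  then obtain j where "k = Suc j" by (cases k) auto
  then show ?case using Suc by simp
qed

lemma t_sum: "k \<ge> 1 \<Longrightarrow> 2 * (\<Sum>i<k. t i) + t k + 2 = 2^k"
proof (induction k rule: nat_induct_at_least)
  case base then show ?case by simp
next
  case (Suc k)
  then show ?case using t_pair[OF Suc(1)] by simp
qed

lemma t_le: assumes "k \<ge> 2" shows "t k \<le> 2^(k-1)"
proof -
  have "t (k-1) + t (Suc (k-1)) = 2^(k-1)" using assms by (intro t_pair) simp
  moreover have "Suc (k-1) = k" using assms by simp
  ultimately show ?thesis by simp
qed

lemma S_t: "S k = 2 * t k"
proof -
  have "{u. admissible u \<and> K u = real k} = E k" by (auto simp: E_def K_adm)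
  then show ?thesis using card_E_t by (simp add: S_def)
qed

lemma N_card: "N k l = card {u. admissible u \<and> length u = l \<and> kk u = k}"
proof -
  have "{u. admissible u \<and> length u = l \<and> K u = real k} = {u. admissible u \<and> length u = l \<and> kk u = k}" by (auto simp: K_adm)
  then show ?thesis by (simp add: N_def)
qed

lemma card_less: "card {v. admissible v \<and> kk v < k} = 2 * (\<Sum>i<k. t i)"
proof -
  have "{v. admissible v \<and> kk v < k} = (\<Union>i\<in>{..<k}. E i)" by (auto simp: E_def)
  moreover have "card (\<Union>i\<in>{..<k}. E i) = (\<Sum>i<k. card (E i))"
    by (rule card_UN_disjoint) (auto simp: finite_E, auto simp: E_def)
  ultimately have "card {v. admissible v \<and> kk v < k} = (\<Sum>i<k. card (E i))" by simp
  then show ?thesis by (simp add: card_E_t sum_distrib_left)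
qed



lemma rank_lt:
  assumes "finite M" "x \<in> M" "y \<in> M" "r x y"
    "\<And>x. x\<in>M \<Longrightarrow> \<not> r x x"
    "\<And>x y z. x\<in>M \<Longrightarrow> y\<in>M \<Longrightarrow> z\<in>M \<Longrightarrow> r x y \<Longrightarrow> r y z \<Longrightarrow> r x z"
  shows "card {v\<in>M. r v x} < card {v\<in>M. r v y}"
proof (rule psubset_card_mono)
  show "finite {v\<in>M. r v y}" using assms(1) by simp
  have "{v\<in>M. r v x} \<subseteq> {v\<in>M. r v y}"
  proof
    fix v assume "v \<in> {v\<in>M. r v x}"
    then have "v \<in> M" "r v x" by auto
    then have "r v y" using assms(6)[of v x y] assms(2,3,4) by simp
    then show "v \<in> {v\<in>M. r v y}" using \<open>v \<in> M\<close> by simp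
  qed
  moreover have "x \<in> {v\<in>M. r v y}" using assms(2,4) by simp
  moreover have "x \<notin> {v\<in>M. r v x}" using assms(5)[OF assms(2)] by simp
  ultimately show "{v\<in>M. r v x} \<subset> {v\<in>M. r v y}" by blast
qed

lemma rank_bij:
  assumes fin: "finite M"
    and irr: "\<And>x. x\<in>M \<Longrightarrow> \<not> r x x"
    and tr: "\<And>x y z. x\<in>M \<Longrightarrow> y\<in>M \<Longrightarrow> z\<in>M \<Longrightarrow> r x y \<Longrightarrow> r y z \<Longrightarrow> r x z"
    and tot: "\<And>x y. x\<in>M \<Longrightarrow> y\<in>M \<Longrightarrow> x \<noteq> y \<Longrightarrow> r x y \<or> r y x"
  shows "bij_betw (\<lambda>u. card {v\<in>M. r v u}) M {0..<card M}"
proof -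
  let ?f = "\<lambda>u. card {v\<in>M. r v u}"
  have inj: "inj_on ?f M"
  proof (rule inj_onI)
    fix x y assume xy: "x \<in> M" "y \<in> M" "?f x = ?f y"
    show "x = y"
    proof (rule ccontr)
      assume "x \<noteq> y"
      then have "r x y \<or> r y x" using tot xy by blast
      then show False
      proof
        assume "r x y" then have "?f x < ?f y" by (rule rank_lt[OF fin xy(1) xy(2) _ irr tr])
        then show False using xy(3) by simp
      next
        assume "r y x" then have "?f y < ?f x" by (rule rank_lt[OF fin xy(2) xy(1) _ irr tr])
        then show False using xy(3) by simp
      qed
    qed
  qed
  have sub: "?f ` M \<subseteq> {0..<card M}"
  proof
    fix a assume "a \<in> ?f ` M"
    then obtain u where u: "u \<in> M" "a = ?f u" by blast
    have "{v\<in>M. r v u} \<subseteq> M - {u}" using irr u by auto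
    then have "?f u \<le> card (M - {u})" using fin by (intro card_mono) auto
    also have "\<dots> < card M" using fin u card_gt_0_iff[of M] by auto
    finally show "a \<in> {0..<card M}" using u by simp
  qed
  have "card (?f ` M) = card {0..<card M}" using card_image[OF inj] by simp
  then have "?f ` M = {0..<card M}" using sub by (intro card_subset_eq) auto
  then show ?thesis using inj by (simp add: bij_betw_def)
qed

lemma bij_count:
  assumes "bij_betw f M {0..<NN}" "finite M"
  shows "card {u\<in>M. f u < c} = min c NN"
proof -
  have inj: "inj_on f {u\<in>M. f u < c}" using assms(1) by (auto simp: bij_betw_def intro: inj_on_subset)
  have "f ` {u\<in>M. f u < c} = {a \<in> f ` M. a < c}" by auto
  also have "\<dots> = {0..<min c NN}" using assms(1) by (auto simp: bij_betw_def)
  finally have "f ` {u\<in>M. f u < c} = {0..<min c NN}" .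
  then show ?thesis using card_image[OF inj] by simp
qed

section \<open>binary strings\<close>

lemma card_bool_len: "card {v::bool list. length v = l} = 2^l"
  using card_lists_length_eq[of "UNIV :: bool set" l] by simp

lemma finite_bool_len: "finite {v::bool list. length v = l}"
  using finite_lists_length_eq[of "UNIV :: bool set" l] by simp

lemma finite_bool_len_le: "finite {v::bool list. length v \<le> l}"
  using finite_lists_length_le[of "UNIV :: bool set" l] by simp

lemma card_bool_lt: "card {v::bool list. length v < l} = 2^l - 1"
proof (induction l)
  case 0 then show ?case by simp
next
  case (Suc l)
  have e: "{v::bool list. length v < Suc l} = {v. length v < l} \<union> {v. length v = l}" by auto
  have "card {v::bool list. length v < Suc l} = card {v::bool list. length v < l} + card {v::bool list. length v = l}"
    unfolding e
    by (rule card_Un_disjoint) (auto intro: finite_subset[OF _ finite_bool_len_le[of l]] finite_bool_len)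
  moreover have "(1::nat) \<le> 2^l" by simp
  ultimately show ?case using Suc card_bool_len[of l] by simp
qed

lemma card_bool_ne_lt: "l \<ge> 1 \<Longrightarrow> card {v::bool list. v \<noteq> [] \<and> length v < l} = 2^l - 2"
proof -
  assume l: "l \<ge> 1"
  have e: "{v::bool list. v \<noteq> [] \<and> length v < l} = {v. length v < l} - {[]}" by auto
  have "card ({v::bool list. length v < l} - {[]}) = card {v::bool list. length v < l} - 1"
    using l by (intro card_Diff_singleton) (auto intro: finite_subset[OF _ finite_bool_len_le[of l]])
  then show ?thesis using e card_bool_lt[of l] by simp
qed

definition blex :: "bool list \<Rightarrow> bool list \<Rightarrow> bool" where
  "blex v w \<longleftrightarrow> (v, w) \<in> lexord {(a, b). a < b}"

lemma blex_props:
  "\<not> blex x x"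
  "blex x y \<Longrightarrow> blex y z \<Longrightarrow> blex x z"
  "x \<noteq> y \<Longrightarrow> blex x y \<or> blex y x"
proof -
  show "\<not> blex x x" unfolding blex_def by (rule lexord_irreflexive) auto
  show "blex x y \<Longrightarrow> blex y z \<Longrightarrow> blex x z" unfolding blex_def
    by (erule lexord_trans) (auto simp: trans_def)
  have "(x, y) \<in> lexord {(a, b). a < (b::bool)} \<or> x = y \<or> (y, x) \<in> lexord {(a, b). a < (b::bool)}"
    by (rule lexord_linear) auto
  then show "x \<noteq> y \<Longrightarrow> blex x y \<or> blex y x" unfolding blex_def by blast
qed

definition brk :: "bool list \<Rightarrow> nat" where
  "brk w = card {v. length v = length w \<and> blex v w}"

lemma brk_bij: "bij_betw brk {v::bool list. length v = l} {0..<2^l}"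
proof -
  have "bij_betw (\<lambda>u. card {v\<in>{v::bool list. length v = l}. blex v u}) {v::bool list. length v = l} {0..<card {v::bool list. length v = l}}"
  proof (rule rank_bij)
    show "finite {v::bool list. length v = l}" by (rule finite_bool_len)
  next
    fix x :: "bool list" show "\<not> blex x x" by (rule blex_props(1))
  next
    fix x y z :: "bool list" assume "blex x y" "blex y z" then show "blex x z" by (rule blex_props(2))
  next
    fix x y :: "bool list" assume "x \<noteq> y" then show "blex x y \<or> blex y x" by (rule blex_props(3))
  qed
  moreover have "bij_betw (\<lambda>u. card {v\<in>{v::bool list. length v = l}. blex v u}) {v::bool list. length v = l} {0..<2^l}
     = bij_betw brk {v::bool list. length v = l} {0..<2^l}"
  proof (rule bij_betw_cong)
    fix u :: "bool list" assume "u \<in> {v::bool list. length v = l}"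
    then have "{v\<in>{v::bool list. length v = l}. blex v u} = {v. length v = length u \<and> blex v u}" by auto
    then show "card {v\<in>{v::bool list. length v = l}. blex v u} = brk u" by (simp add: brk_def)
  qed
  ultimately show ?thesis by (simp only: card_bool_len)
qed

lemma bin_rank_eq: "w \<noteq> [] \<Longrightarrow> bin_rank w = 2^length w - 1 + brk w"
proof -
  assume w: "w \<noteq> []"
  let ?l = "length w"
  have l: "?l \<ge> 1" using w by (cases w) auto
  have e: "{v. v \<noteq> [] \<and> bin_less v w} = {v::bool list. v \<noteq> [] \<and> length v < ?l} \<union> {v. length v = ?l \<and> blex v w}"
    using w by (auto simp: bin_less_def blex_def)
  have "card {v. v \<noteq> [] \<and> bin_less v w} = card {v::bool list. v \<noteq> [] \<and> length v < ?l} + card {v. length v = ?l \<and> blex v w}"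
    unfolding e
    by (rule card_Un_disjoint) (auto intro: finite_subset[OF _ finite_bool_len_le[of ?l]])
  then have "bin_rank w = 2^?l - 2 + brk w + 1" using card_bool_ne_lt[OF l] by (simp add: bin_rank_def brk_def)
  moreover have "(2::nat)^1 \<le> 2^?l" using l by (rule power_increasing) simp
  ultimately show ?thesis by simp
qed

lemma pow_ivl_unique:
  fixes a b m :: nat
  assumes "2^a \<le> m" "m < 2^Suc a" "2^b \<le> m" "m < 2^Suc b"
  shows "a = b"
proof (rule ccontr)
  assume "a \<noteq> b"
  then have "Suc a \<le> b \<or> Suc b \<le> a" by auto
  then show False
  proof
    assume "Suc a \<le> b" then have "(2::nat)^Suc a \<le> 2^b" by (rule power_increasing) simp
    then show False using assms by simp
  next
    assume "Suc b \<le> a" then have "(2::nat)^Suc b \<le> 2^a" by (rule power_increasing) simp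
    then show False using assms by simp
  qed
qed

lemma bstr_len:
  assumes j: "1 \<le> j" and lo: "2^l \<le> j+1" and hi: "j+1 < 2^Suc l"
  shows "length (bstr j) = l"
proof -
  have l: "l \<ge> 1"
  proof (rule ccontr)
    assume "\<not> l \<ge> 1" then have "l = 0" by simp
    then show False using hi j by simp
  qed
  have i: "j + 1 - 2^l < 2^l" using hi by simp
  have "j + 1 - 2^l \<in> brk ` {v. length v = l}" using brk_bij[of l] i by (simp add: bij_betw_def)
  then obtain w where w: "length w = l" "brk w = j + 1 - 2^l" by auto
  have wne: "w \<noteq> []" using w(1) l by (cases w) auto
  have rw: "bin_rank w = j" using bin_rank_eq[OF wne] w lo by simp
  have uniq: "w' = w" if w': "w' \<noteq> [] \<and> bin_rank w' = j" for w'
  proof -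
    let ?l' = "length w'"
    have b: "brk w' < 2^?l'" using brk_bij[of ?l'] unfolding bij_betw_def by auto
    have w'ne: "w' \<noteq> []" using w' by simp
    have r: "bin_rank w' = 2^?l' - 1 + brk w'" using w'ne by (rule bin_rank_eq)
    have "1 \<le> (2::nat)^?l'" by simp
    then have "2^?l' \<le> j + 1" "j + 1 < 2^Suc ?l'" using r b w' by auto
    then have "?l' = l" using pow_ivl_unique lo hi by blast
    then have "brk w' = brk w" using r rw w' bin_rank_eq[OF wne] w by simp
    then show "w' = w" using brk_bij[of l] \<open>?l' = l\<close> w unfolding bij_betw_def inj_on_def by auto
  qed
  have "bstr j = w" unfolding bstr_def
  proof (rule the_equality)
    show "w \<noteq> [] \<and> bin_rank w = j" using wne rw by simp
  next
    fix w' assume "w' \<noteq> [] \<and> bin_rank w' = j" then show "w' = w" by (rule uniq)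
  qed
  then show ?thesis using w by simp
qed

lemma bstr_len_iff:
  assumes j: "1 \<le> j"
  shows "length (bstr j) = l \<longleftrightarrow> 2^l \<le> j+1 \<and> j+1 < 2^Suc l"
proof
  assume h: "2^l \<le> j+1 \<and> j+1 < 2^Suc l"
  then show "length (bstr j) = l" using bstr_len j by blast
next
  assume h: "length (bstr j) = l"
  obtain l0 where l0: "2^l0 \<le> j+1" "j+1 < 2^(l0+1)" using ex_power_ivl1[of 2 "j+1"] by auto
  then have "length (bstr j) = l0" using bstr_len j by simp
  then show "2^l \<le> j+1 \<and> j+1 < 2^Suc l" using h l0 by simp
qed



lemma finite_Pr_set: "finite {u::sym list. length u = n \<and> F u}"
  by (rule finite_subset[OF _ finite_len_eq_sym[of n]]) auto

lemma Pr_adm: "Pr n F = (\<Sum>u\<in>{u. length u = n \<and> admissible u \<and> F u}. prob u)"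
  unfolding Pr_def
proof (rule sum.mono_neutral_right)
  show "finite {u. length u = n \<and> F u}" by (rule finite_Pr_set)
  show "{u. length u = n \<and> admissible u \<and> F u} \<subseteq> {u. length u = n \<and> F u}" by auto
  show "\<forall>i\<in>{u. length u = n \<and> F u} - {u. length u = n \<and> admissible u \<and> F u}. prob i = 0"
    using prob_nadm by auto
qed

lemma Pr_block:
  assumes "\<And>u. length u = n \<Longrightarrow> admissible u \<Longrightarrow> F u \<Longrightarrow> kk u = k"
  shows "Pr n F = real (card {u. length u = n \<and> admissible u \<and> F u}) * (1/2)^k"
proof -
  have "Pr n F = (\<Sum>u\<in>{u. length u = n \<and> admissible u \<and> F u}. (1/2)^k)"
    unfolding Pr_adm by (rule sum.cong) (auto simp: prob_adm assms)
  then show ?thesis by simp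
qed

lemma Pr_ind: "Pr n F = (\<Sum>u\<in>{u::sym list. length u = n}. if F u then prob u else 0)"
proof -
  have "{u. length u = n \<and> F u} = {u \<in> {u::sym list. length u = n}. F u}" by auto
  then show ?thesis unfolding Pr_def using sum.inter_filter[OF finite_len_eq_sym[of n], of prob F] by simp
qed

lemma lists_Suc: "{u::sym list. length u = Suc n} = (\<lambda>(a,w). a#w) ` (UNIV \<times> {w. length w = n})"
  by (auto simp: length_Suc_conv)

lemma inj_Cons_pair: "inj_on (\<lambda>(a,w). a#w) X"
  by (auto simp: inj_on_def)

lemma inner:
  "(\<Sum>a\<in>UNIV. if Xcnt (a#b#w) = y then prob (a#b#w) else 0)
   = 1/2 * (if Xcnt (b#w) = y then prob (b#w) else 0) + 1/2 * (if y \<noteq> 0 \<and> Xcnt (b#w) = y - 1 then prob (b#w) else 0)"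
  by (cases b) (auto simp: UNIV_sym Xcnt_Cons2)

lemma Pr_step:
  "Pr (Suc (Suc n)) (\<lambda>u. Xcnt u = y) = 1/2 * Pr (Suc n) (\<lambda>u. Xcnt u = y) + 1/2 * Pr (Suc n) (\<lambda>u. y \<noteq> 0 \<and> Xcnt u = y - 1)"
proof -
  let ?L = "{w::sym list. length w = Suc n}"
  let ?h = "\<lambda>u. if Xcnt u = y then prob u else 0"
  have "Pr (Suc (Suc n)) (\<lambda>u. Xcnt u = y) = (\<Sum>u\<in>{u::sym list. length u = Suc (Suc n)}. ?h u)"
    by (rule Pr_ind)
  also have "\<dots> = (\<Sum>p\<in>UNIV \<times> ?L. ?h ((\<lambda>(a,w). a#w) p))"
    unfolding lists_Suc[of "Suc n"] by (rule sum.reindex[OF inj_Cons_pair, unfolded comp_def])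
  also have "\<dots> = (\<Sum>a\<in>UNIV. \<Sum>w\<in>?L. ?h (a#w))"
    unfolding sum.cartesian_product by (rule sum.cong) auto
  also have "\<dots> = (\<Sum>w\<in>?L. \<Sum>a\<in>UNIV. ?h (a#w))"
    by (rule sum.swap)
  also have "\<dots> = (\<Sum>w\<in>?L. 1/2 * (if Xcnt w = y then prob w else 0) + 1/2 * (if y \<noteq> 0 \<and> Xcnt w = y - 1 then prob w else 0))"
  proof (rule sum.cong)
    fix w assume "w \<in> ?L"
    then obtain b w' where "w = b # w'" by (cases w) auto
    then show "(\<Sum>a\<in>UNIV. ?h (a#w)) = 1/2 * (if Xcnt w = y then prob w else 0) + 1/2 * (if y \<noteq> 0 \<and> Xcnt w = y - 1 then prob w else 0)"
      by (simp only: \<open>w = b # w'\<close> inner)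
  qed simp
  also have "\<dots> = 1/2 * (\<Sum>w\<in>?L. if Xcnt w = y then prob w else 0) + 1/2 * (\<Sum>w\<in>?L. if y \<noteq> 0 \<and> Xcnt w = y - 1 then prob w else 0)"
    by (simp add: sum.distrib sum_distrib_left)
  also have "\<dots> = 1/2 * Pr (Suc n) (\<lambda>u. Xcnt u = y) + 1/2 * Pr (Suc n) (\<lambda>u. y \<noteq> 0 \<and> Xcnt u = y - 1)"
    by (simp only: Pr_ind)
  finally show ?thesis .
qed

lemma len1: "{u::sym list. length u = Suc 0} = {[A],[B],[C],[D]}"
  using sym_cases by (auto simp: length_Suc_conv)

lemma Q: "Pr (Suc n) (\<lambda>u. Xcnt u = y) = real (n choose y) * (1/2)^n"
proof (induction n arbitrary: y)
  case 0
  show ?case unfolding Pr_ind len1 by (cases y) (auto simp: Xcnt_def)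
next
  case (Suc n)
  show ?case
  proof (cases y)
    case 0
    have "Pr (Suc n) (\<lambda>u. y \<noteq> 0 \<and> Xcnt u = y - 1) = 0" using 0 by (simp add: Pr_def)
    then show ?thesis using Pr_step[of n y] Suc.IH[of y] 0 by simp
  next
    case (Suc y')
    have "Pr (Suc n) (\<lambda>u. y \<noteq> 0 \<and> Xcnt u = y - 1) = Pr (Suc n) (\<lambda>u. Xcnt u = y')" using Suc by simp
    then show ?thesis using Pr_step[of n y] Suc.IH[of y] Suc.IH[of y'] Suc
      by (simp add: algebra_simps)
  qed
qed



lemma arith_fin: "real (min (a - b) m) / real m = min 1 (max 0 ((real a - real b) / real m))"
proof (cases "m = 0")
  case True then show ?thesis by simp
next
  case False
  then have m: "real m > 0" by simp
  show ?thesis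
  proof (cases "a \<le> b")
    case True
    then have "(real a - real b) / real m \<le> 0" using m by (simp add: divide_le_0_iff)
    then show ?thesis using True by simp
  next
    case False
    then have d: "real (a - b) = real a - real b" by simp
    show ?thesis
    proof (cases "a - b \<le> m")
      case True
      then have "(real a - real b) / real m \<le> 1" using m d by (simp add: divide_le_eq)
      moreover have "(real a - real b) / real m \<ge> 0" using m False by simp
      ultimately show ?thesis using True d by (simp add: min_def)
    next
      case F2: False
      then have "(real a - real b) / real m > 1" using m d by (simp add: less_divide_eq)
      then show ?thesis using F2 m by (simp add: min_def)
    qed
  qed
qed

lemma sym_lex_props:
  "\<not> sym_lex_less x x"
  "sym_lex_less x y \<Longrightarrow> sym_lex_less y z \<Longrightarrow> sym_lex_less x z"
  "x \<noteq> y \<Longrightarrow> sym_lex_less x y \<or> sym_lex_less y x"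
proof -
  show "\<not> sym_lex_less x x" unfolding sym_lex_less_def by (rule lexord_irreflexive) auto
  show "sym_lex_less x y \<Longrightarrow> sym_lex_less y z \<Longrightarrow> sym_lex_less x z" unfolding sym_lex_less_def
    by (erule lexord_trans) (auto simp: trans_def)
  have inj: "inj sym_idx" unfolding inj_def
  proof (intro allI impI)
    fix a b :: sym assume "sym_idx a = sym_idx b" then show "a = b" by (cases a; cases b) auto
  qed
  have "(map sym_idx x, map sym_idx y) \<in> lexord {(a, b). a < (b::nat)} \<or> map sym_idx x = map sym_idx y \<or> (map sym_idx y, map sym_idx x) \<in> lexord {(a, b). a < (b::nat)}"
    by (rule lexord_linear) auto
  moreover assume "x \<noteq> y"
  then have "map sym_idx x \<noteq> map sym_idx y" using inj by simp
  ultimately show "sym_lex_less x y \<or> sym_lex_less y x" unfolding sym_lex_less_def by blast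
qed

lemma kk_len: "kk u = length u + 1 + Xcnt u" by (simp add: kk_def)

lemma Xcnt_le: "length u = n \<Longrightarrow> Xcnt u \<le> n - 1"
proof -
  assume "length u = n"
  have "Xcnt u \<le> length (butlast u)" unfolding Xcnt_def by (rule length_filter_le)
  then show "Xcnt u \<le> n - 1" using \<open>length u = n\<close> by simp
qed

context
  fixes n x k :: nat
  assumes n2: "n \<ge> 2" and xn: "x \<le> n - 1" and kdef: "k = n + 1 + x"
begin

definition "MM = {u. admissible u \<and> length u = n \<and> kk u = k}"
definition "lp u = card {v\<in>MM. sym_lex_less v u}"
definition "Wn = W n k"

lemma finite_MM: "finite MM"
  by (rule finite_subset[OF _ finite_len_eq_sym[of n]]) (auto simp: MM_def)

lemma lp_bij: "bij_betw lp MM {0..<card MM}"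
proof -
  have "bij_betw (\<lambda>u. card {v\<in>MM. sym_lex_less v u}) MM {0..<card MM}"
  proof (rule rank_bij)
    show "finite MM" by (rule finite_MM)
  next
    fix x :: "sym list" show "\<not> sym_lex_less x x" by (rule sym_lex_props(1))
  next
    fix x y z :: "sym list" assume "sym_lex_less x y" "sym_lex_less y z" then show "sym_lex_less x z" by (rule sym_lex_props(2))
  next
    fix x y :: "sym list" assume "x \<noteq> y" then show "sym_lex_less x y \<or> sym_lex_less y x" by (rule sym_lex_props(3))
  qed
  then show ?thesis unfolding lp_def[abs_def] .
qed

lemma card_A2: "card {v. admissible v \<and> kk v = k \<and> length v < n} = Wn"
proof -
  have e: "{v. admissible v \<and> kk v = k \<and> length v < n} = (\<Union>l\<in>{1..n-1}. {v. admissible v \<and> length v = l \<and> kk v = k})"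
  proof (rule set_eqI)
    fix v show "v \<in> {v. admissible v \<and> kk v = k \<and> length v < n} \<longleftrightarrow> v \<in> (\<Union>l\<in>{1..n-1}. {v. admissible v \<and> length v = l \<and> kk v = k})"
    proof
      assume h: "v \<in> {v. admissible v \<and> kk v = k \<and> length v < n}"
      then have "v \<noteq> []" by auto
      then have "length v \<ge> 1" by (cases v) auto
      then show "v \<in> (\<Union>l\<in>{1..n-1}. {v. admissible v \<and> length v = l \<and> kk v = k})" using h by auto
    next
      assume "v \<in> (\<Union>l\<in>{1..n-1}. {v. admissible v \<and> length v = l \<and> kk v = k})"
      then show "v \<in> {v. admissible v \<and> kk v = k \<and> length v < n}" using n2 by auto
    qed
  qed
  have "card (\<Union>l\<in>{1..n-1}. {v. admissible v \<and> length v = l \<and> kk v = k}) = (\<Sum>l=1..n-1. card {v. admissible v \<and> length v = l \<and> kk v = k})"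
  proof (rule card_UN_disjoint)
    show "finite {1..n-1}" by simp
    have "\<And>l. finite {v. admissible v \<and> length v = l \<and> kk v = k}"
      by (rule finite_subset[OF _ finite_len_eq_sym]) auto
    then show "\<forall>l\<in>{1..n-1}. finite {v. admissible v \<and> length v = l \<and> kk v = k}" by blast
    show "\<forall>i\<in>{1..n-1}. \<forall>j\<in>{1..n-1}. i \<noteq> j \<longrightarrow> {v. admissible v \<and> length v = i \<and> kk v = k} \<inter> {v. admissible v \<and> length v = j \<and> kk v = k} = {}" by auto
  qed
  then show ?thesis unfolding e Wn_def W_def by (simp add: N_card)
qed

lemma rank_formula:
  assumes u: "u \<in> MM"
  shows "src_rank u = 2 * (\<Sum>i<k. t i) + Wn + lp u + 1"
proof -
  have uad: "admissible u" and ul: "length u = n" and uk: "kk u = k" using u by (auto simp: MM_def)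
  let ?A1 = "{v. admissible v \<and> kk v < k}"
  let ?A2 = "{v. admissible v \<and> kk v = k \<and> length v < n}"
  let ?A3 = "{v\<in>MM. sym_lex_less v u}"
  have e: "{v. admissible v \<and> src_less v u} = ?A1 \<union> ?A2 \<union> ?A3"
    using uad ul uk by (auto simp: src_less_def K_adm MM_def)
  have f1: "finite ?A1"
    by (rule finite_subset[OF _ finite_len_le_sym[of k]]) (auto simp: kk_def)
  have f2: "finite ?A2"
    by (rule finite_subset[OF _ finite_len_le_sym[of k]]) (auto simp: kk_def)
  have f3: "finite ?A3" using finite_MM by simp
  have "card (?A1 \<union> ?A2 \<union> ?A3) = card (?A1 \<union> ?A2) + card ?A3"
    by (rule card_Un_disjoint) (use f1 f2 f3 in \<open>auto simp: MM_def\<close>)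
  moreover have "card (?A1 \<union> ?A2) = card ?A1 + card ?A2"
    by (rule card_Un_disjoint) (use f1 f2 in auto)
  ultimately have "card {v. admissible v \<and> src_less v u} = card ?A1 + card ?A2 + card ?A3"
    unfolding e by simp
  then show ?thesis unfolding src_rank_def card_less card_A2 lp_def by simp
qed

lemma Ind_iff:
  assumes u: "u \<in> MM"
  shows "Ind u \<longleftrightarrow> Wn + lp u < t k"
proof -
  have uad: "admissible u" and uk: "kk u = k" using u by (auto simp: MM_def)
  have k3: "k \<ge> 3" using n2 kdef by simp
  let ?T = "2 * (\<Sum>i<k. t i)"
  let ?j = "src_rank u"
  have j: "?j = ?T + Wn + lp u + 1" by (rule rank_formula[OF u])
  have ts: "?T + t k + 2 = 2^k" using t_sum[of k] k3 by simp
  have tl: "t k \<le> 2^(k-1)" using t_le[of k] k3 by simp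
  have pk: "(2::nat)^k = 2 * 2^(k-1)" using k3 by (metis Suc_diff_1 less_le_trans numeral_3_eq_3 power_Suc zero_less_Suc)
  have "Ind u \<longleftrightarrow> real (length (bstr ?j)) = real k - 1"
    unfolding Ind_def code_def K_adm[OF uad] uk ..
  also have "\<dots> \<longleftrightarrow> length (bstr ?j) = k - 1" using k3 by auto
  also have "\<dots> \<longleftrightarrow> 2^(k-1) \<le> ?j + 1 \<and> ?j + 1 < 2^Suc (k-1)"
    by (rule bstr_len_iff) (simp add: src_rank_def)
  also have "\<dots> \<longleftrightarrow> Wn + lp u < t k"
  proof -
    have "Suc (k-1) = k" using k3 by simp
    moreover have "2^(k-1) \<le> ?j + 1" using j ts tl pk by linarith
    ultimately show ?thesis using j ts by auto
  qed
  finally show ?thesis .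
qed

lemma card_Ind: "card {u\<in>MM. Ind u} = min (t k - Wn) (card MM)"
proof -
  have "{u\<in>MM. Ind u} = {u\<in>MM. lp u < t k - Wn}" using Ind_iff by auto
  then show ?thesis using bij_count[OF lp_bij finite_MM] by simp
qed

lemma g_val: "g n x = min 1 (max 0 (V n k / real (N k n)))"
proof -
  have kkX: "\<And>u. length u = n \<Longrightarrow> Xcnt u = x \<Longrightarrow> kk u = k" using kdef by (simp add: kk_def)
  have p1: "Pr n (\<lambda>u. Ind u \<and> Xcnt u = x) = real (card {u. length u = n \<and> admissible u \<and> (Ind u \<and> Xcnt u = x)}) * (1/2)^k"
    by (rule Pr_block) (use kkX in auto)
  have p2: "Pr n (\<lambda>u. Xcnt u = x) = real (card {u. length u = n \<and> admissible u \<and> Xcnt u = x}) * (1/2)^k"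
    by (rule Pr_block) (use kkX in auto)
  have s2: "{u. length u = n \<and> admissible u \<and> Xcnt u = x} = MM" unfolding MM_def using kdef by (auto simp: kk_def)
  have s1: "{u. length u = n \<and> admissible u \<and> (Ind u \<and> Xcnt u = x)} = {u\<in>MM. Ind u}" unfolding MM_def using kdef by (auto simp: kk_def)
  have "g n x = real (card {u\<in>MM. Ind u}) / real (card MM)"
    unfolding g_def cond_Pr_def p1 p2 s1 s2 by simp
  also have "\<dots> = min 1 (max 0 ((real (t k) - real Wn) / real (card MM)))"
    unfolding card_Ind by (rule arith_fin)
  also have "real (t k) - real Wn = V n k" unfolding V_def S_t Wn_def by simp
  also have "card MM = N k n" unfolding N_card MM_def by (simp add: conj_commute)
  finally show ?thesis .
qed

end



lemma split_sum_X:
  assumes "n \<ge> 1"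
  shows "(\<Sum>y = 0..n-1. Pr n (\<lambda>u. Ind u \<and> Xcnt u = y)) = Pr n Ind"
proof -
  let ?L = "{u::sym list. length u = n}"
  have "(\<Sum>y = 0..n-1. Pr n (\<lambda>u. Ind u \<and> Xcnt u = y))
      = (\<Sum>y = 0..n-1. \<Sum>u\<in>?L. if Ind u \<and> Xcnt u = y then prob u else 0)"
    by (simp only: Pr_ind)
  also have "\<dots> = (\<Sum>u\<in>?L. \<Sum>y = 0..n-1. if Ind u \<and> Xcnt u = y then prob u else 0)"
    by (rule sum.swap)
  also have "\<dots> = (\<Sum>u\<in>?L. if Ind u then prob u else 0)"
  proof (rule sum.cong)
    fix u assume "u \<in> ?L"
    then have xl: "Xcnt u \<in> {0..n-1}" using Xcnt_le[of u n] by simp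
    show "(\<Sum>y = 0..n-1. if Ind u \<and> Xcnt u = y then prob u else 0) = (if Ind u then prob u else 0)"
    proof (cases "Ind u")
      case True
      then have "(\<Sum>y = 0..n-1. if Ind u \<and> Xcnt u = y then prob u else 0) = (\<Sum>y = 0..n-1. if Xcnt u = y then prob u else 0)" by simp
      also have "\<dots> = prob u" using xl by (simp add: sum.delta)
      finally show ?thesis using True by simp
    qed simp
  qed simp
  also have "\<dots> = Pr n Ind" by (simp only: Pr_ind)
  finally show ?thesis .
qed

theorem mainTheorem8:
  fixes n x :: nat
  assumes "n \<ge> 2" and "x \<le> n - 1"
  defines "k \<equiv> n + 1 + x"
  shows "g n x = min 1 (max 0 (V n k / real (N k n)))
    \<and> Pr n Ind = (\<Sum>y = 0..n-1. real ((n-1) choose y) * (1/2)^(n-1) * g n y)"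
proof
  show "g n x = min 1 (max 0 (V n k / real (N k n)))"
    using g_val[OF assms(1) assms(2)] k_def by simp
  have each: "real ((n-1) choose y) * (1/2)^(n-1) * g n y = Pr n (\<lambda>u. Ind u \<and> Xcnt u = y)"
    if y: "y \<in> {0..n-1}" for y
  proof -
    have sn: "Suc (n-1) = n" using assms(1) by simp
    have q: "Pr n (\<lambda>u. Xcnt u = y) = real ((n-1) choose y) * (1/2)^(n-1)"
      using Q[of "n-1" y] sn by simp
    have "(n-1) choose y > 0" using y by simp
    then have pos: "real ((n-1) choose y) * (1/2)^(n-1) \<noteq> 0" by simp
    show ?thesis unfolding g_def cond_Pr_def q using pos by simp
  qed
  have "(\<Sum>y = 0..n-1. real ((n-1) choose y) * (1/2)^(n-1) * g n y) = (\<Sum>y = 0..n-1. Pr n (\<lambda>u. Ind u \<and> Xcnt u = y))"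
    by (rule sum.cong) (rule refl, rule each)
  also have "\<dots> = Pr n Ind" using split_sum_X assms(1) by simp
  finally show "Pr n Ind = (\<Sum>y = 0..n-1. real ((n-1) choose y) * (1/2)^(n-1) * g n y)" by simp
qed


end
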